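(* Let $(\mathcal S,\gamma)$ be a normalized IFS arc in $\mathbb{R}^n$. Suppose there is a constant $C\ge1$ such that for all case-2-triples $(x,z,y)$, $$\max\{|x-z|,|z-y|\}\le C|x-y|.\qquad( * )$$ Then $\gamma$ has bounded turning with constant $\frac{2C\operatorname{diam}(\gamma)}{D_{\mathcal S}}$. Conversely, if $\gamma$ has bounded turning with constant $C\ge1$, then $( * )$ holds for all points $x\le z\le y$ of $\gamma$.
   Context: $\mathcal S=\{S_1,\dots,S_N\}$, $N\ge2$, are contracting similarities of $\mathbb{R}^n$ with invariant set $\gamma$ (unique nonempty compact set with $\gamma=\bigcup_iS_i(\gamma)$); normalized IFS path: $S_1(0)=0$, $S_N(\mathbf e_1)=\mathbf e_1$, $S_i(\mathbf e_1)=S_{i+1}(0)$ for $i=1,\dots,N-1$; IFS arc: moreover $S_i(\gamma)\cap S_{i+1}(\gamma)=\{S_{i+1}(0)\}$ and $S_i(\gamma)\cap S_j(\gamma)=\emptyset$ for $|i-j|>1$, $i,j\in\{1,\dots,N\}$. Then $\gamma$ is homeomorphic to $[0,1]$, and $\le$ denotes the induced total order on $\gamma$ with $0<\mathbf e_1$; $\gamma_{x,y}=\{p: x\le p\le y\}$ for $x\le y$, and $x\le A$ means $x\le p$ for all $p\in A$. For $\sigma\in\{1,\dots,N\}^m$ write $S_\sigma=S_{\sigma_1}\circ\cdots\circ S_{\sigma_m}$ (identity for the empty word); a vertex of generation $m\ge1$ is a point $S_\sigma(0)$ or $S_\sigma(\mathbf e_1)$ with $\sigma\in\{1,\dots,N\}^m$.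 $D_{\mathcal S}=\min_{z,\tilde z}\min\{|x-y|: x,y\in\gamma,\ x\le\gamma_{z,\tilde z}\le y\}$, the first minimum over pairs $z<\tilde z$ of distinct generation-1 vertices. For $x<y$ in $\gamma$, let $m\ge1$ be the smallest integer such that some generation-$m$ vertex $z$ satisfies $x\le z\le y$; if $z$ is the only generation-$m$ vertex with $x\le z\le y$, the triple $(x,z,y)$ is called a case-2-triple. $\gamma$ has bounded turning with constant $C$ if any distinct $a,b\in\gamma$ lie in a continuum $E\subseteq\gamma$ with $\operatorname{diam}E\le C|a-b|$. *)

theory Defs
  imports "HOL-Analysis.Analysis"
begin

definition contracting_similarity :: "('a::metric_space \<Rightarrow> 'a) \<Rightarrow> bool" where
  "contracting_similarity f \<longleftrightarrow>
     (\<exists>r. 0 < r \<and> r < 1 \<and> (\<forall>x y. dist (f x) (f y) = r * dist x y))"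

text \<open>Normalized IFS arc: maps S 1, ..., S N, invariant set \<gamma>, e plays the role of e_1.\<close>
definition normalized_IFS_arc ::
  "nat \<Rightarrow> (nat \<Rightarrow> 'a::euclidean_space \<Rightarrow> 'a) \<Rightarrow> 'a set \<Rightarrow> 'a \<Rightarrow> bool" where
  "normalized_IFS_arc N S \<gamma> e \<longleftrightarrow>
     2 \<le> N \<and>
     (\<forall>i\<in>{1..N}. contracting_similarity (S i)) \<and>
     compact \<gamma> \<and> \<gamma> \<noteq> {} \<and> \<gamma> = (\<Union>i\<in>{1..N}. S i ` \<gamma>) \<and>
     S 1 0 = 0 \<and> S N e = e \<and>
     (\<forall>i\<in>{1..<N}. S i e = S (Suc i) 0) \<and>
     (\<forall>i\<in>{1..<N}. S i ` \<gamma> \<inter> S (Suc i) ` \<gamma> = {S (Suc i) 0}) \<and>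
     (\<forall>i\<in>{1..N}. \<forall>j\<in>{1..N}. (i + 1 < j \<or> j + 1 < i) \<longrightarrow> S i ` \<gamma> \<inter> S j ` \<gamma> = {})"

definition arc_le :: "'a::euclidean_space set \<Rightarrow> 'a \<Rightarrow> 'a \<Rightarrow> 'a \<Rightarrow> bool" where
  "arc_le \<gamma> e x y \<longleftrightarrow> x \<in> \<gamma> \<and> y \<in> \<gamma> \<and>
     (\<exists>(h::real \<Rightarrow> 'a) g. homeomorphism {0..1} \<gamma> h g \<and> g 0 < g e \<and> g x \<le> g y)"

definition arc_less :: "'a::euclidean_space set \<Rightarrow> 'a \<Rightarrow> 'a \<Rightarrow> 'a \<Rightarrow> bool" where
  "arc_less \<gamma> e x y \<longleftrightarrow> arc_le \<gamma> e x y \<and> x \<noteq> y"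

definition arc_seg :: "'a::euclidean_space set \<Rightarrow> 'a \<Rightarrow> 'a \<Rightarrow> 'a \<Rightarrow> 'a set" where
  "arc_seg \<gamma> e x y = {p. arc_le \<gamma> e x p \<and> arc_le \<gamma> e p y}"

definition word_map :: "(nat \<Rightarrow> 'a \<Rightarrow> 'a) \<Rightarrow> nat list \<Rightarrow> 'a \<Rightarrow> 'a" where
  "word_map S \<sigma> = foldr (\<lambda>i f. S i \<circ> f) \<sigma> id"

definition words :: "nat \<Rightarrow> nat \<Rightarrow> nat list set" where
  "words N m = {\<sigma>. length \<sigma> = m \<and> set \<sigma> \<subseteq> {1..N}}"

definition vertices :: "nat \<Rightarrow> (nat \<Rightarrow> 'a::euclidean_space \<Rightarrow> 'a) \<Rightarrow> 'a \<Rightarrow> nat \<Rightarrow> 'a set" where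
  "vertices N S e m = (\<lambda>\<sigma>. word_map S \<sigma> 0) ` words N m \<union> (\<lambda>\<sigma>. word_map S \<sigma> e) ` words N m"

definition D_S :: "nat \<Rightarrow> (nat \<Rightarrow> 'a::euclidean_space \<Rightarrow> 'a) \<Rightarrow> 'a set \<Rightarrow> 'a \<Rightarrow> real" where
  "D_S N S \<gamma> e = Inf {dist x y | x y z z'.
       z \<in> vertices N S e 1 \<and> z' \<in> vertices N S e 1 \<and> arc_less \<gamma> e z z' \<and>
       x \<in> \<gamma> \<and> y \<in> \<gamma> \<and>
       (\<forall>p\<in>arc_seg \<gamma> e z z'. arc_le \<gamma> e x p) \<and>
       (\<forall>p\<in>arc_seg \<gamma> e z z'. arc_le \<gamma> e p y)}"

definition case2_triple ::
  "nat \<Rightarrow> (nat \<Rightarrow> 'a::euclidean_space \<Rightarrow> 'a) \<Rightarrow> 'a set \<Rightarrow> 'a \<Rightarrow> 'a \<Rightarrow> 'a \<Rightarrow> 'a \<Rightarrow> bool" where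
  "case2_triple N S \<gamma> e x z y \<longleftrightarrow> arc_less \<gamma> e x y \<and>
     (\<exists>m\<ge>1. (\<forall>k. 1 \<le> k \<and> k < m \<longrightarrow>
                 \<not> (\<exists>v\<in>vertices N S e k. arc_le \<gamma> e x v \<and> arc_le \<gamma> e v y)) \<and>
            z \<in> vertices N S e m \<and> arc_le \<gamma> e x z \<and> arc_le \<gamma> e z y \<and>
            (\<forall>v\<in>vertices N S e m. arc_le \<gamma> e x v \<and> arc_le \<gamma> e v y \<longrightarrow> v = z))"

definition bounded_turning :: "'a::metric_space set \<Rightarrow> real \<Rightarrow> bool" where
  "bounded_turning \<gamma> C \<longleftrightarrow>
     (\<forall>a\<in>\<gamma>. \<forall>b\<in>\<gamma>. a \<noteq> b \<longrightarrow>
        (\<exists>E. E \<subseteq> \<gamma> \<and> compact E \<and> connected E \<and> a \<in> E \<and> b \<in> E \<and>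
             diameter E \<le> C * dist a b))"

end

theory Submission
  imports Defs
begin


locale ifs =
  fixes N :: nat and S :: "nat \<Rightarrow> 'a::euclidean_space \<Rightarrow> 'a" and \<gamma> :: "'a set" and e :: 'a
  assumes eB: "e \<in> Basis" and arc: "normalized_IFS_arc N S \<gamma> e"
begin

lemma N2: "2 \<le> N" using arc by (simp add: normalized_IFS_arc_def)
lemma cpt: "compact \<gamma>" using arc by (simp add: normalized_IFS_arc_def)
lemma ne: "\<gamma> \<noteq> {}" using arc by (simp add: normalized_IFS_arc_def)
lemma inv: "\<gamma> = (\<Union>i\<in>{1..N}. S i ` \<gamma>)" using arc by (simp add: normalized_IFS_arc_def)
lemma S10: "S 1 0 = 0" using arc by (simp add: normalized_IFS_arc_def)
lemma SNe: "S N e = e" using arc by (simp add: normalized_IFS_arc_def)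
lemma junc: "i \<in> {1..<N} \<Longrightarrow> S i e = S (Suc i) 0" using arc by (simp add: normalized_IFS_arc_def)
lemma inter1: "i \<in> {1..<N} \<Longrightarrow> S i ` \<gamma> \<inter> S (Suc i) ` \<gamma> = {S (Suc i) 0}"
  using arc by (simp add: normalized_IFS_arc_def)
lemma inter2: "i \<in> {1..N} \<Longrightarrow> j \<in> {1..N} \<Longrightarrow> i + 1 < j \<Longrightarrow> S i ` \<gamma> \<inter> S j ` \<gamma> = {}"
  using arc unfolding normalized_IFS_arc_def by blast
lemma norm_e: "norm e = 1" using eB by simp
lemma e_ne0: "e \<noteq> 0" using eB by auto

definition rat :: "nat \<Rightarrow> real" where
  "rat i = (SOME r. 0 < r \<and> r < 1 \<and> (\<forall>x y. dist (S i x) (S i y) = r * dist x y))"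

lemma rat: assumes "i \<in> {1..N}"
  shows "0 < rat i" "rat i < 1" "dist (S i x) (S i y) = rat i * dist x y"
proof -
  have "contracting_similarity (S i)" using arc assms by (simp add: normalized_IFS_arc_def)
  then have "\<exists>r. 0 < r \<and> r < 1 \<and> (\<forall>x y. dist (S i x) (S i y) = r * dist x y)"
    by (simp add: contracting_similarity_def)
  then have "0 < rat i \<and> rat i < 1 \<and> (\<forall>x y. dist (S i x) (S i y) = rat i * dist x y)"
    unfolding rat_def by (rule someI_ex)
  then show "0 < rat i" "rat i < 1" "dist (S i x) (S i y) = rat i * dist x y" by auto
qed

lemma S_inj: assumes i: "i \<in> {1..N}" shows "S i x = S i y \<longleftrightarrow> x = y"
proof -
  have "dist (S i x) (S i y) = rat i * dist x y" "0 < rat i" using rat[OF i] by auto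
  then show ?thesis by (metis dist_eq_0_iff mult_eq_0_iff less_irrefl)
qed

lemma S_cont: "i \<in> {1..N} \<Longrightarrow> continuous_on A (S i)"
proof -
  assume i: "i \<in> {1..N}"
  have "lipschitz_on (rat i) A (S i)"
    by (rule lipschitz_onI) (use rat[OF i] in auto)
  then show ?thesis by (rule lipschitz_on_continuous_on)
qed

definition q :: real where "q = Max (rat ` {1..N})"

lemma q: "0 < q" "q < 1" "i \<in> {1..N} \<Longrightarrow> rat i \<le> q"
proof -
  have f: "finite (rat ` {1..N})" "rat ` {1..N} \<noteq> {}" using N2 by auto
  obtain j where j: "j \<in> {1..N}" "q = rat j" using Max_in[OF f] unfolding q_def by auto
  show "0 < q" "q < 1" using rat[OF j(1)] j by auto
  show "i \<in> {1..N} \<Longrightarrow> rat i \<le> q" unfolding q_def using f by auto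
qed

definition idx :: "real \<Rightarrow> nat" where
  "idx t = (if 1 \<le> t then N else nat \<lfloor>real N * t\<rfloor> + 1)"
definition loc :: "real \<Rightarrow> real" where
  "loc t = real N * t - (real (idx t) - 1)"
definition T :: "(real \<Rightarrow> 'a) \<Rightarrow> real \<Rightarrow> 'a" where
  "T f t = S (idx t) (f (loc t))"

lemma idx_range: assumes "t \<in> {0..1}" shows "idx t \<in> {1..N}"
proof (cases "1 \<le> t")
  case False
  then have "real N * t < real N" using N2 assms by auto
  then have "\<lfloor>real N * t\<rfloor> < int N" by (simp add: floor_less_iff)
  moreover have "0 \<le> \<lfloor>real N * t\<rfloor>" using assms by auto
  ultimately have "nat \<lfloor>real N * t\<rfloor> < N" by (simp add: nat_less_iff)
  then show ?thesis using False assms by (auto simp: idx_def)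
qed (use N2 in \<open>auto simp: idx_def\<close>)

lemma loc_range: assumes "t \<in> {0..1}" shows "loc t \<in> {0..1}" "t < 1 \<Longrightarrow> loc t < 1"
proof -
  show "loc t \<in> {0..1}"
  proof (cases "1 \<le> t")
    case True then have "t = 1" using assms by auto
    then show ?thesis using N2 by (auto simp: loc_def idx_def)
  next
    case False
    have "0 \<le> real N * t" using assms by auto
    then show ?thesis using False unfolding loc_def idx_def
      by (auto simp: of_nat_nat) linarith+
  qed
  show "t < 1 \<Longrightarrow> loc t < 1"
    using assms unfolding loc_def idx_def by (auto simp: of_nat_nat) linarith
qed

lemma piece:
  assumes i: "i \<in> {1..N}" and t: "(real i - 1) / N \<le> t" "t \<le> real i / N"
  shows "(idx t = i \<and> loc t = real N * t - (real i - 1)) \<or>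
         (i < N \<and> t = real i / N \<and> idx t = Suc i \<and> loc t = 0)"
proof -
  have Np: "real N > 0" using N2 by auto
  have a: "real i - 1 \<le> real N * t" "real N * t \<le> real i" using t Np
    by (auto simp: field_simps)
  show ?thesis
  proof (cases "1 \<le> t")
    case True
    have "real N \<le> real N * t" using True Np by simp
    then have "real N \<le> real i" using a by linarith
    then have "i = N" using i by auto
    moreover have "t = 1" using True t \<open>i = N\<close> Np by auto
    ultimately show ?thesis by (auto simp: idx_def loc_def)
  next
    case False
    show ?thesis
    proof (cases "real N * t = real i")
      case True
      have "real N * t < real N" using False Np by simp
      then have "i < N" using True by linarith
      moreover have "t = real i / N" using True Np by (auto simp: field_simps)
      ultimately show ?thesis using False True by (auto simp: idx_def loc_def)
    next
      case ne: False
      then have "\<lfloor>real N * t\<rfloor> = int i - 1" using a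
        by (intro floor_unique) auto
      then have "idx t = i" using False i by (auto simp: idx_def)
      then show ?thesis by (auto simp: loc_def)
    qed
  qed
qed

lemma T_piece:
  assumes f: "f 0 = 0" "f 1 = e" and i: "i \<in> {1..N}"
    and t: "(real i - 1) / N \<le> t" "t \<le> real i / N"
  shows "T f t = S i (f (real N * t - (real i - 1)))"
proof -
  have Np: "real N > 0" using N2 by auto
  from piece[OF i t] show ?thesis
  proof
    assume "idx t = i \<and> loc t = real N * t - (real i - 1)" then show ?thesis by (simp add: T_def)
  next
    assume h: "i < N \<and> t = real i / N \<and> idx t = Suc i \<and> loc t = 0"
    then have "real N * t - (real i - 1) = 1" using Np by auto
    have "T f t = S (Suc i) 0" using h[THEN conjunct2, THEN conjunct2] f by (simp add: T_def)
    also have "\<dots> = S i e" using junc[of i] h i by simp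
    also have "\<dots> = S i (f (real N * t - (real i - 1)))" using \<open>real N * t - (real i - 1) = 1\<close> f by simp
    finally show ?thesis .
  qed
qed

lemma T0: "f 0 = 0 \<Longrightarrow> T f 0 = 0"
proof -
  assume "f 0 = 0"
  have "idx 0 = 1" "loc 0 = 0" using N2 by (auto simp: idx_def loc_def)
  then show ?thesis using S10 \<open>f 0 = 0\<close> by (simp add: T_def)
qed
lemma T1: "f 1 = e \<Longrightarrow> T f 1 = e"
  using N2 by (simp add: T_def idx_def loc_def SNe of_nat_diff)

end

context ifs begin

lemma idx_piece: assumes "t \<in> {0..1}"
  shows "(real (idx t) - 1) / N \<le> t" "t \<le> real (idx t) / N"
proof -
  have Np: "real N > 0" using N2 by auto
  have "loc t \<in> {0..1}" using loc_range(1)[OF assms] .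
  then have "0 \<le> real N * t - (real (idx t) - 1)" "real N * t - (real (idx t) - 1) \<le> 1"
    by (auto simp: loc_def)
  then show "(real (idx t) - 1) / N \<le> t" "t \<le> real (idx t) / N" using Np
    by (auto simp: field_simps)
qed

lemma T_cont:
  assumes c: "continuous_on {0..1} f" and f: "f 0 = 0" "f 1 = e"
  shows "continuous_on {0..1} (T f)"
proof -
  define P where "P i = {(real i - 1) / N .. real i / N}" for i :: nat
  have Np: "real N > 0" using N2 by auto
  have U: "{0..1} = (\<Union>i\<in>{1..N}. P i)"
  proof
    show "{0..1} \<subseteq> (\<Union>i\<in>{1..N}. P i)"
    proof
      fix t :: real assume t: "t \<in> {0..1}"
      then show "t \<in> (\<Union>i\<in>{1..N}. P i)" using idx_range[OF t] idx_piece[OF t]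
        unfolding P_def by auto
    qed
    show "(\<Union>i\<in>{1..N}. P i) \<subseteq> {0..1}"
    proof
      fix t assume "t \<in> (\<Union>i\<in>{1..N}. P i)"
      then obtain i where i: "i \<in> {1..N}" "t \<in> P i" by auto
      have "0 \<le> (real i - 1) / N" using i Np by auto
      moreover have "real i / N \<le> 1" using i Np by auto
      ultimately show "t \<in> {0..1}" using i(2) unfolding P_def atLeastAtMost_iff by linarith
    qed
  qed
  have "continuous_on (\<Union>i\<in>{1..N}. P i) (T f)"
  proof (rule continuous_on_closed_Union)
    fix i assume i: "i \<in> {1..N}"
    show "closed (P i)" by (simp add: P_def)
    have "continuous_on (P i) (\<lambda>t. S i (f (real N * t - (real i - 1))))"
    proof (rule continuous_on_compose2[OF S_cont[OF i]])
      show "continuous_on (P i) (\<lambda>t. f (real N * t - (real i - 1)))"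
      proof (rule continuous_on_compose2[OF c])
        show "continuous_on (P i) (\<lambda>t. real N * t - (real i - 1))" by (intro continuous_intros)
        show "(\<lambda>t. real N * t - (real i - 1)) ` P i \<subseteq> {0..1}"
          using Np by (auto simp: P_def field_simps)
      qed
    qed auto
    then show "continuous_on (P i) (T f)"
      by (rule continuous_on_eq) (use T_piece[OF f i] in \<open>auto simp: P_def\<close>)
  qed simp
  then show ?thesis using U by simp
qed

definition h0 :: "real \<Rightarrow> 'a" where "h0 t = t *\<^sub>R e"
definition hk :: "nat \<Rightarrow> real \<Rightarrow> 'a" where "hk k = (T ^^ k) h0"

lemma hk_Suc: "hk (Suc k) = T (hk k)" by (simp add: hk_def)
lemma hk_0: "hk 0 = h0" by (simp add: hk_def)

lemma hk_01: "hk k 0 = 0 \<and> hk k 1 = e"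
  by (induction k) (auto simp: hk_Suc hk_0 h0_def T0 T1)

lemma hk_cont: "continuous_on {0..1} (hk k)"
proof (induction k)
  case 0 show ?case by (simp add: hk_0 h0_def continuous_intros)
next
  case (Suc k) then show ?case using T_cont hk_01 by (simp add: hk_Suc)
qed

definition B :: real where "B = Max ((\<lambda>i. norm (S i 0)) ` {1..N})"
lemma B: "i \<in> {1..N} \<Longrightarrow> norm (S i 0) \<le> B"
  unfolding B_def by (rule Max_ge) auto

lemma S_norm: "i \<in> {1..N} \<Longrightarrow> norm (S i x - S i y) = rat i * norm (x - y)"
  using rat(3)[of i x y] by (simp add: dist_norm)

lemma T_contract:
  assumes t: "t \<in> {0..1}" and b: "\<And>u. u \<in> {0..1} \<Longrightarrow> norm (f u - g u) \<le> c"
  shows "norm (T f t - T g t) \<le> q * c"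
proof -
  have i: "idx t \<in> {1..N}" by (rule idx_range[OF t])
  have "norm (T f t - T g t) = rat (idx t) * norm (f (loc t) - g (loc t))"
    unfolding T_def by (rule S_norm[OF i])
  also have "\<dots> \<le> q * c"
    by (intro mult_mono q(3)[OF i] b loc_range(1)[OF t]) (use rat(1)[OF i] q in auto)
  finally show ?thesis .
qed

lemma hk_step: "t \<in> {0..1} \<Longrightarrow> norm (hk (Suc n) t - hk n t) \<le> q ^ n * (B + 2)"
proof (induction n arbitrary: t)
  case 0
  have i: "idx t \<in> {1..N}" by (rule idx_range[OF 0])
  have l: "loc t \<in> {0..1}" by (rule loc_range(1)[OF 0])
  have "norm (T h0 t - h0 t) \<le> norm (S (idx t) (loc t *\<^sub>R e) - S (idx t) 0) + norm (S (idx t) 0) + norm (t *\<^sub>R e)"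
  proof -
    let ?x = "S (idx t) (loc t *\<^sub>R e) - S (idx t) 0" and ?y = "S (idx t) 0" and ?z = "t *\<^sub>R e"
    have "T h0 t - h0 t = (?x + ?y) - ?z" by (simp add: T_def h0_def)
    then have "norm (T h0 t - h0 t) \<le> norm (?x + ?y) + norm ?z" using norm_triangle_ineq4[of "?x + ?y" ?z] by simp
    also have "\<dots> \<le> norm ?x + norm ?y + norm ?z" using norm_triangle_ineq[of ?x ?y] by simp
    finally show ?thesis .
  qed
  also have "\<dots> \<le> 1 + B + 1"
  proof (intro add_mono)
    have "norm (S (idx t) (loc t *\<^sub>R e) - S (idx t) 0) = rat (idx t) * \<bar>loc t\<bar>"
      using S_norm[OF i] norm_e by simp
    also have "\<dots> \<le> 1" using rat[OF i] l by (auto intro: mult_le_one)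
    finally show "norm (S (idx t) (loc t *\<^sub>R e) - S (idx t) 0) \<le> 1" .
    show "norm (S (idx t) 0) \<le> B" by (rule B[OF i])
    show "norm (t *\<^sub>R e) \<le> 1" using 0 norm_e by auto
  qed
  finally show ?case by (simp add: hk_Suc hk_0)
next
  case (Suc n)
  have "norm (T (hk (Suc n)) t - T (hk n) t) \<le> q * (q ^ n * (B + 2))"
    by (rule T_contract[OF Suc.prems Suc.IH])
  then show ?case by (simp add: hk_Suc[of "Suc n"] hk_Suc[of n] )
qed


definition L :: "real \<Rightarrow> 'a" where "L t = (\<Sum>i. hk (Suc i) t - hk i t)"
definition h :: "real \<Rightarrow> 'a" where "h t = h0 t + L t"

lemma psum: "(\<Sum>i<n. hk (Suc i) t - hk i t) = hk n t - h0 t"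
  using sum_lessThan_telescope[of "\<lambda>i. hk i t" n] by (simp add: hk_0)

lemma hk_unif: "uniform_limit {0..1} (\<lambda>n t. \<Sum>i<n. hk (Suc i) t - hk i t) L sequentially"
  unfolding L_def
proof (rule Weierstrass_m_test[where M = "\<lambda>n. q^n * (B+2)"])
  show "\<And>n x. x \<in> {0..1} \<Longrightarrow> norm (hk (Suc n) x - hk n x) \<le> q ^ n * (B + 2)" by (rule hk_step)
  show "summable (\<lambda>n. q ^ n * (B + 2))"
    by (intro summable_mult2 summable_geometric) (use q in auto)
qed

lemma L_cont: "continuous_on {0..1} L"
proof (rule uniform_limit_theorem[OF _ hk_unif])
  show "\<forall>\<^sub>F n in sequentially. continuous_on {0..1} (\<lambda>t. \<Sum>i<n. hk (Suc i) t - hk i t)"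
    unfolding psum by (intro always_eventually allI continuous_intros hk_cont) (simp add: h0_def continuous_intros)
qed simp

lemma h_cont: "continuous_on {0..1} h"
  unfolding h_def by (intro continuous_intros L_cont) (simp add: h0_def continuous_intros)

lemma hk_tendsto: assumes t: "t \<in> {0..1}" shows "(\<lambda>n. hk n t) \<longlonglongrightarrow> h t"
proof -
  have "(\<lambda>n. \<Sum>i<n. hk (Suc i) t - hk i t) \<longlonglongrightarrow> L t" by (rule tendsto_uniform_limitI[OF hk_unif t])
  then have "(\<lambda>n. h0 t + (\<Sum>i<n. hk (Suc i) t - hk i t)) \<longlonglongrightarrow> h0 t + L t" by (intro tendsto_add) auto
  then show ?thesis unfolding psum h_def by simp
qed

lemma h_0: "h 0 = 0" and h_1: "h 1 = e"
proof -
  have "(\<lambda>n. hk n 0) \<longlonglongrightarrow> h 0" by (rule hk_tendsto) auto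
  then show "h 0 = 0" using hk_01 by (simp add: LIMSEQ_const_iff)
  have "(\<lambda>n. hk n 1) \<longlonglongrightarrow> h 1" by (rule hk_tendsto) auto
  then show "h 1 = e" using hk_01 by (simp add: LIMSEQ_const_iff)
qed

lemma h_fix: assumes t: "t \<in> {0..1}" shows "h t = T h t"
proof -
  have i: "idx t \<in> {1..N}" by (rule idx_range[OF t])
  have l: "loc t \<in> {0..1}" by (rule loc_range(1)[OF t])
  have "(\<lambda>n. hk (Suc n) t) \<longlonglongrightarrow> h t" by (rule LIMSEQ_Suc[OF hk_tendsto[OF t]])
  moreover have "(\<lambda>n. hk (Suc n) t) \<longlonglongrightarrow> T h t"
  proof -
    have c: "isCont (S (idx t)) (h (loc t))"
      using S_cont[OF i, of UNIV] by (simp add: continuous_on_eq_continuous_at)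
    have "(\<lambda>n. S (idx t) (hk n (loc t))) \<longlonglongrightarrow> S (idx t) (h (loc t))"
      by (rule isCont_tendsto_compose[OF c hk_tendsto[OF l]])
    then show ?thesis by (simp add: hk_Suc T_def)
  qed
  ultimately show ?thesis by (rule LIMSEQ_unique)
qed

lemma h_piece:
  assumes i: "i \<in> {1..N}" and t: "(real i - 1) / N \<le> t" "t \<le> real i / N"
  shows "h t = S i (h (real N * t - (real i - 1)))"
proof -
  have Np: "real N > 0" using N2 by auto
  have "0 \<le> (real i - 1) / N" "real i / N \<le> 1" using i Np by auto
  then have "t \<in> {0..1}" using t by auto
  then show ?thesis using h_fix T_piece[OF h_0 h_1 i t] by simp
qed

end

context ifs begin

lemma inv_sub:
  assumes A: "compact A" "A \<noteq> {}" "A = (\<Union>i\<in>{1..N}. S i ` A)"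
    and Bs: "compact Bs" "Bs \<noteq> {}" "Bs = (\<Union>i\<in>{1..N}. S i ` Bs)"
  shows "A \<subseteq> Bs"
proof -
  have clB: "closed Bs" using Bs(1) by (rule compact_imp_closed)
  have "continuous_on A (\<lambda>x. infdist x Bs)" by (intro continuous_intros)
  then obtain a0 where a0: "a0 \<in> A" "\<And>y. y \<in> A \<Longrightarrow> infdist y Bs \<le> infdist a0 Bs"
    using continuous_attains_sup[OF A(1,2)] by blast
  from a0(1) A(3) obtain i a' where i: "i \<in> {1..N}" "a' \<in> A" "a0 = S i a'" by blast
  obtain b where b: "b \<in> Bs" "infdist a' Bs = dist a' b"
    using infdist_attains_inf[OF clB Bs(2)] by blast
  have "S i b \<in> Bs" using b(1) i(1) Bs(3) by blast
  then have "infdist a0 Bs \<le> dist (S i a') (S i b)" unfolding i(3) by (rule infdist_le)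
  also have "\<dots> = rat i * infdist a' Bs" using rat(3)[OF i(1)] b(2) by simp
  also have "\<dots> \<le> rat i * infdist a0 Bs" using a0(2)[OF i(2)] rat(1)[OF i(1)] by simp
  finally have "infdist a0 Bs \<le> rat i * infdist a0 Bs" .
  have z: "infdist a0 Bs = 0"
  proof (rule ccontr)
    assume "infdist a0 Bs \<noteq> 0"
    then have p: "0 < infdist a0 Bs" using infdist_nonneg[of a0 Bs] by simp
    have "rat i * infdist a0 Bs < 1 * infdist a0 Bs"
      by (rule mult_strict_right_mono[OF rat(2)[OF i(1)] p])
    then show False using \<open>infdist a0 Bs \<le> rat i * infdist a0 Bs\<close> by simp
  qed
  show ?thesis
  proof
    fix a assume a: "a \<in> A"
    have "infdist a Bs = 0" using a0(2)[OF a] z infdist_nonneg[of a Bs] by simp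
    then show "a \<in> Bs" using in_closure_iff_infdist_zero[OF Bs(2)] clB by simp
  qed
qed

lemma h_image: "h ` {0..1} = \<gamma>"
proof -
  let ?K = "h ` {0..1}"
  have Np: "real N > 0" using N2 by auto
  have K: "compact ?K" by (rule compact_continuous_image[OF h_cont]) simp
  have Kinv: "?K = (\<Union>i\<in>{1..N}. S i ` ?K)"
  proof
    show "?K \<subseteq> (\<Union>i\<in>{1..N}. S i ` ?K)"
    proof
      fix x assume "x \<in> ?K"
      then obtain t where t: "t \<in> {0..1}" "x = h t" by auto
      then have "x = S (idx t) (h (loc t))" using h_fix by (simp add: T_def)
      then show "x \<in> (\<Union>i\<in>{1..N}. S i ` ?K)" using idx_range[OF t(1)] loc_range(1)[OF t(1)] by blast
    qed
    show "(\<Union>i\<in>{1..N}. S i ` ?K) \<subseteq> ?K"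
    proof
      fix x assume "x \<in> (\<Union>i\<in>{1..N}. S i ` ?K)"
      then obtain i u where iu: "i \<in> {1..N}" "u \<in> {0..1}" "x = S i (h u)" by auto
      define t where "t = (u + real i - 1) / N"
      have t1: "(real i - 1) / N \<le> t" "t \<le> real i / N" using iu Np
        by (auto simp: t_def divide_right_mono)
      have t2: "real N * t - (real i - 1) = u" using Np by (simp add: t_def)
      have "0 \<le> (real i - 1) / N" "real i / N \<le> 1" using iu Np by auto
      then have "t \<in> {0..1}" using t1 by auto
      moreover have "h t = x" using h_piece[OF iu(1) t1] t2 iu(3) by simp
      ultimately show "x \<in> ?K" by blast
    qed
  qed
  have "?K \<subseteq> \<gamma>" by (rule inv_sub[OF K _ Kinv cpt ne inv]) simp
  moreover have "\<gamma> \<subseteq> ?K" by (rule inv_sub[OF cpt ne inv K _ Kinv]) simp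
  ultimately show ?thesis by auto
qed

lemma h_in: "t \<in> {0..1} \<Longrightarrow> h t \<in> \<gamma>" using h_image by auto
lemma zero_in: "0 \<in> \<gamma>" using h_in[of 0] h_0 by simp
lemma e_in: "e \<in> \<gamma>" using h_in[of 1] h_1 by simp

lemma e_cell: assumes i: "i \<in> {1..N}" and ei: "e \<in> S i ` \<gamma>" shows "i = N"
proof (rule ccontr)
  assume ne: "i \<noteq> N"
  have eN: "e \<in> S N ` \<gamma>" using SNe e_in by (metis image_eqI)
  have NN: "N \<in> {1..N}" using N2 by auto
  show False
  proof (cases "i + 1 = N")
    case True
    then have "i \<in> {1..<N}" using i by auto
    then have "e \<in> {S (Suc i) 0}" using inter1[of i] ei eN True by auto
    then have "S N 0 = S N e" using True SNe by simp
    then have "0 = e" using S_inj[OF NN] by blast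
    then show False using e_ne0 by simp
  next
    case False
    then have "i + 1 < N" using i ne by auto
    then show False using inter2[OF i NN] ei eN by blast
  qed
qed

lemma h_e_aux: "t \<in> {0..1} \<Longrightarrow> h t = e \<Longrightarrow> 1 - (1 / real N) ^ m \<le> t"
proof (induction m arbitrary: t)
  case 0 then show ?case by simp
next
  case (Suc m)
  have Np: "real N > 0" using N2 by auto
  have i: "idx t \<in> {1..N}" by (rule idx_range[OF Suc.prems(1)])
  have l: "loc t \<in> {0..1}" by (rule loc_range(1)[OF Suc.prems(1)])
  have eq: "S (idx t) (h (loc t)) = e" using h_fix[OF Suc.prems(1)] Suc.prems(2) by (simp add: T_def)
  then have "e \<in> S (idx t) ` \<gamma>" using h_in[OF l] by (metis image_eqI)
  then have iN: "idx t = N" by (rule e_cell[OF i])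
  have NN: "N \<in> {1..N}" using N2 by auto
  have "h (loc t) = e" using eq iN SNe S_inj[OF NN] by metis
  then have "1 - (1 / real N) ^ m \<le> loc t" using Suc.IH l by blast
  then have "1 - (1 / real N) ^ m \<le> real N * t - (real N - 1)" using iN by (simp add: loc_def)
  then have a: "real N - (1 / real N) ^ m \<le> real N * t" by linarith
  have "1 - (1 / real N) ^ Suc m = (real N - (1 / real N) ^ m) / N" using Np
    by (simp add: field_simps)
  also have "\<dots> \<le> (real N * t) / N" by (rule divide_right_mono[OF a]) (use Np in simp)
  also have "\<dots> = t" using Np by simp
  finally show ?case .
qed

lemma h_e: assumes "t \<in> {0..1}" "h t = e" shows "t = 1"
proof (rule ccontr)
  assume "t \<noteq> 1"
  then have "0 < 1 - t" using assms by auto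
  moreover have "1 / real N < 1" using N2 by auto
  ultimately obtain m where "(1 / real N) ^ m < 1 - t" using real_arch_pow_inv by blast
  then show False using h_e_aux[OF assms, of m] by simp
qed

lemma inj_level: "s \<in> {0..1} \<Longrightarrow> t \<in> {0..1} \<Longrightarrow> h s = h t \<Longrightarrow> \<bar>s - t\<bar> \<le> (1 / real N) ^ m"
proof (induction m arbitrary: s t)
  case 0 then show ?case by auto
next
  case (Suc m)
  have Np: "real N > 0" using N2 by auto
  have key: "\<bar>s - t\<bar> \<le> (1 / real N) ^ Suc m"
    if st: "s \<in> {0..1}" "t \<in> {0..1}" "h s = h t" and le: "idx s \<le> idx t" for s t
  proof -
    have i: "idx s \<in> {1..N}" by (rule idx_range[OF st(1)])
    have j: "idx t \<in> {1..N}" by (rule idx_range[OF st(2)])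
    have ls: "loc s \<in> {0..1}" by (rule loc_range(1)[OF st(1)])
    have lt: "loc t \<in> {0..1}" by (rule loc_range(1)[OF st(2)])
    have hs: "h s = S (idx s) (h (loc s))" using h_fix[OF st(1)] by (simp add: T_def)
    have ht: "h t = S (idx t) (h (loc t))" using h_fix[OF st(2)] by (simp add: T_def)
    show ?thesis
    proof (cases "idx s = idx t")
      case True
      have "S (idx s) (h (loc s)) = S (idx s) (h (loc t))" using hs ht st(3) True by simp
      then have "h (loc s) = h (loc t)" using S_inj[OF i] by simp
      then have "\<bar>loc s - loc t\<bar> \<le> (1 / real N) ^ m" using Suc.IH ls lt by blast
      moreover have "loc s - loc t = real N * (s - t)" using True by (simp add: loc_def algebra_simps)
      ultimately have "real N * \<bar>s - t\<bar> \<le> (1 / real N) ^ m" using Np by (simp add: abs_mult)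
      then show ?thesis using Np by (simp add: field_simps)
    next
      case False
      then have lt2: "idx s < idx t" using le by auto
      have m1: "h s \<in> S (idx s) ` \<gamma>" using hs h_in[OF ls] by blast
      have m2: "h t \<in> S (idx t) ` \<gamma>" using ht h_in[OF lt] by blast
      show ?thesis
      proof (cases "idx s + 1 < idx t")
        case True
        have "h s \<in> S (idx s) ` \<gamma> \<inter> S (idx t) ` \<gamma>" using m1 m2 st(3) by simp
        then show ?thesis using inter2[OF i j True] by simp
      next
        case False
        then have jt: "idx t = Suc (idx s)" using lt2 by auto
        have iN: "idx s \<in> {1..<N}" using i j jt by auto
        have "h s \<in> S (idx s) ` \<gamma> \<inter> S (Suc (idx s)) ` \<gamma>" using m1 m2 st(3) jt by simp
        then have "h s \<in> {S (Suc (idx s)) 0}" using inter1[OF iN] by simp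
        then have "S (idx s) (h (loc s)) = S (idx s) e" using hs junc[OF iN] by simp
        then have "h (loc s) = e" using S_inj[OF i] by blast
        then have "loc s = 1" using h_e ls by blast
        moreover have "s < 1"
        proof (rule ccontr)
          assume "\<not> s < 1" then have "idx s = N" by (simp add: idx_def)
          then show False using iN by simp
        qed
        ultimately show ?thesis using loc_range(2)[OF st(1)] by simp
      qed
    qed
  qed
  show ?case
  proof (cases "idx s \<le> idx t")
    case True then show ?thesis using key Suc.prems by blast
  next
    case False then show ?thesis using key[of t s] Suc.prems by (simp add: abs_minus_commute)
  qed
qed

lemma h_inj: "inj_on h {0..1}"
proof (rule inj_onI)
  fix s t assume st: "s \<in> {0..1}" "t \<in> {0..1}" "h s = h t"
  show "s = t"
  proof (rule ccontr)
    assume "s \<noteq> t"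
    then have "0 < \<bar>s - t\<bar>" by simp
    moreover have "1 / real N < 1" using N2 by auto
    ultimately obtain m where "(1 / real N) ^ m < \<bar>s - t\<bar>" using real_arch_pow_inv by blast
    then show False using inj_level[OF st] by (meson not_le)
  qed
qed

definition g :: "'a \<Rightarrow> real" where "g = (SOME g. homeomorphism {0..1} \<gamma> h g)"

lemma homeo: "homeomorphism {0..1} \<gamma> h g"
proof -
  have "\<exists>g. homeomorphism {0..1} \<gamma> h g"
    by (rule homeomorphism_compact[OF _ h_cont h_image h_inj]) simp
  then show ?thesis unfolding g_def by (rule someI_ex)
qed

lemma g_h: "t \<in> {0..1} \<Longrightarrow> g (h t) = t" using homeo by (simp add: homeomorphism_def)
lemma h_g: "x \<in> \<gamma> \<Longrightarrow> h (g x) = x" using homeo by (simp add: homeomorphism_def)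
lemma g_in: "x \<in> \<gamma> \<Longrightarrow> g x \<in> {0..1}" using homeo by (auto simp: homeomorphism_def)
lemma g_cont: "continuous_on \<gamma> g" using homeo by (simp add: homeomorphism_def)

end


lemma inj_mono01_aux:
  fixes \<phi> :: "real \<Rightarrow> real"
  assumes c: "continuous_on {0..1} \<phi>" and inj: "inj_on \<phi> {0..1}" and lt: "\<phi> 0 < \<phi> 1"
    and y: "0 < y" "y \<le> 1"
  shows "\<phi> 0 < \<phi> y"
proof (cases "y = 1")
  case True then show ?thesis using lt by simp
next
  case False
  then have "0 < y" "y < 1" using y by auto
  from continuous_inj_imp_mono[OF this c inj] show ?thesis using lt by auto
qed

lemma inj_mono01:
  fixes \<phi> :: "real \<Rightarrow> real"
  assumes c: "continuous_on {0..1} \<phi>" and inj: "inj_on \<phi> {0..1}" and lt: "\<phi> 0 < \<phi> 1"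
    and xy: "x \<in> {0..1}" "y \<in> {0..1}" "x < y"
  shows "\<phi> x < \<phi> y"
proof (cases "x = 0")
  case True then show ?thesis using inj_mono01_aux[OF c inj lt, of y] xy by auto
next
  case False
  then have x: "0 < x" "x < y" using xy by auto
  have c': "continuous_on {0..y} \<phi>" by (rule continuous_on_subset[OF c]) (use xy in auto)
  have inj': "inj_on \<phi> {0..y}" by (rule inj_on_subset[OF inj]) (use xy in auto)
  have "\<phi> 0 < \<phi> y" using inj_mono01_aux[OF c inj lt, of y] xy x by auto
  with continuous_inj_imp_mono[OF x c' inj'] show ?thesis by auto
qed

context ifs begin

lemma g0: "g 0 = 0" using g_h[of 0] h_0 by simp
lemma ge: "g e = 1" using g_h[of 1] h_1 by simp

lemma arc_le_iff: "arc_le \<gamma> e x y \<longleftrightarrow> x \<in> \<gamma> \<and> y \<in> \<gamma> \<and> g x \<le> g y"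
proof
  assume "x \<in> \<gamma> \<and> y \<in> \<gamma> \<and> g x \<le> g y"
  then show "arc_le \<gamma> e x y" unfolding arc_le_def using homeo g0 ge
    by (intro conjI exI[of _ h] exI[of _ g]) auto
next
  assume "arc_le \<gamma> e x y"
  then have xy: "x \<in> \<gamma>" "y \<in> \<gamma>" and
    ex: "\<exists>(h'::real \<Rightarrow> 'a) g'. homeomorphism {0..1} \<gamma> h' g' \<and> g' 0 < g' e \<and> g' x \<le> g' y"
    unfolding arc_le_def by auto
  from ex obtain h' :: "real \<Rightarrow> 'a" and g' :: "'a \<Rightarrow> real" where H: "homeomorphism {0..1} \<gamma> h' g'" and o: "g' 0 < g' e" "g' x \<le> g' y"
    by blast
  define \<phi> where "\<phi> = g \<circ> h'"
  have hc: "continuous_on {0..1} h'" "h' ` {0..1} = \<gamma>" using H by (auto simp: homeomorphism_def)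
  have c: "continuous_on {0..1} \<phi>" unfolding \<phi>_def
    by (rule continuous_on_compose[OF hc(1)]) (use g_cont hc(2) in simp)
  have inj: "inj_on \<phi> {0..1}" unfolding \<phi>_def
  proof (rule comp_inj_on)
    show "inj_on h' {0..1}" using H by (metis homeomorphism_apply1 inj_on_inverseI)
    show "inj_on g (h' ` {0..1})" using hc(2) by (metis h_g inj_on_inverseI)
  qed
  have g'01: "g' 0 \<in> {0..1}" "g' e \<in> {0..1}" "g' x \<in> {0..1}" "g' y \<in> {0..1}"
    using H zero_in e_in xy by (auto simp: homeomorphism_def)
  have p0: "\<phi> (g' 0) = 0" "\<phi> (g' e) = 1"
    using H zero_in e_in g0 ge by (auto simp: \<phi>_def homeomorphism_def)
  have ne: "\<phi> 0 \<noteq> \<phi> 1" using inj_onD[OF inj, of 0 1] by auto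
  have lt: "\<phi> 0 < \<phi> 1"
  proof (rule ccontr)
    assume "\<not> \<phi> 0 < \<phi> 1"
    then have "(\<lambda>t. - \<phi> t) 0 < (\<lambda>t. - \<phi> t) 1" using ne by auto
    moreover have "continuous_on {0..1} (\<lambda>t. - \<phi> t)" by (intro continuous_intros c)
    moreover have "inj_on (\<lambda>t. - \<phi> t) {0..1}" using inj by (auto simp: inj_on_def)
    ultimately have "- \<phi> (g' 0) < - \<phi> (g' e)" using inj_mono01 g'01 o(1) by blast
    then show False using p0 by simp
  qed
  have "\<phi> (g' x) \<le> \<phi> (g' y)"
    using inj_mono01[OF c inj lt g'01(3,4)] o(2) by (cases "g' x = g' y") auto
  then have "g x \<le> g y" using H xy by (simp add: \<phi>_def homeomorphism_def)
  then show "x \<in> \<gamma> \<and> y \<in> \<gamma> \<and> g x \<le> g y" using xy by simp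
qed

lemma part2:
  assumes bt: "bounded_turning \<gamma> C" and xz: "arc_le \<gamma> e x z" and zy: "arc_le \<gamma> e z y"
  shows "max (dist x z) (dist z y) \<le> C * dist x y"
proof -
  have m: "x \<in> \<gamma>" "y \<in> \<gamma>" "z \<in> \<gamma>" "g x \<le> g z" "g z \<le> g y" using xz zy arc_le_iff by auto
  show ?thesis
  proof (cases "x = y")
    case True
    then have "g z = g x" using m by simp
    then have "z = x" using h_g m by metis
    then show ?thesis using True by simp
  next
    case False
    then obtain E where E: "E \<subseteq> \<gamma>" "compact E" "connected E" "x \<in> E" "y \<in> E"
      "diameter E \<le> C * dist x y" using bt m unfolding bounded_turning_def by blast
    have "connected (g ` E)" by (rule connected_continuous_image[OF continuous_on_subset[OF g_cont E(1)] E(3)])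
    then have "{g x..g y} \<subseteq> g ` E" using connected_contains_Icc E(4,5) by blast
    then have "g z \<in> g ` E" using m by auto
    then obtain w where w: "w \<in> E" "g z = g w" by auto
    then have "z \<in> E" using h_g m E(1) by (metis subsetD)
    have bE: "bounded E" using E(2) by (rule compact_imp_bounded)
    have "dist x z \<le> diameter E" "dist z y \<le> diameter E"
      using diameter_bounded_bound[OF bE] E \<open>z \<in> E\<close> by auto
    then show ?thesis using E(6) by simp
  qed
qed

end

context ifs begin

fun code :: "nat list \<Rightarrow> nat" where
  "code [] = 0"
| "code (i # \<sigma>) = (i - 1) * N ^ length \<sigma> + code \<sigma>"

fun rw :: "nat list \<Rightarrow> real" where
  "rw [] = 1"
| "rw (i # \<sigma>) = rat i * rw \<sigma>"

lemma word_map_Nil: "word_map S [] = id" by (simp add: word_map_def)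
lemma word_map_Cons: "word_map S (i # \<sigma>) = S i \<circ> word_map S \<sigma>" by (simp add: word_map_def)

lemma code_lt: "set \<sigma> \<subseteq> {1..N} \<Longrightarrow> code \<sigma> < N ^ length \<sigma>"
proof (induction \<sigma>)
  case Nil then show ?case by simp
next
  case (Cons i \<sigma>)
  then have i: "1 \<le> i" "i \<le> N" and c: "code \<sigma> < N ^ length \<sigma>" by auto
  have "(i - 1) * N ^ length \<sigma> + code \<sigma> < (i - 1) * N ^ length \<sigma> + N ^ length \<sigma>" using c by simp
  also have "\<dots> = i * N ^ length \<sigma>" using i by (cases i) auto
  also have "\<dots> \<le> N * N ^ length \<sigma>" using i by simp
  finally show ?case by simp
qed

lemma code_surj: "j < N ^ m \<Longrightarrow> \<exists>\<sigma>\<in>words N m. code \<sigma> = j"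
proof (induction m arbitrary: j)
  case 0 then show ?case by (auto simp: words_def)
next
  case (Suc m)
  have Np: "0 < N ^ m" using N2 by simp
  define i where "i = j div N ^ m + 1"
  have "j div N ^ m < N" using Suc.prems Np by (simp add: div_less_iff_less_mult mult.commute)
  then have i: "i \<in> {1..N}" by (auto simp: i_def)
  obtain \<sigma> where \<sigma>: "\<sigma> \<in> words N m" "code \<sigma> = j mod N ^ m" using Suc.IH[of "j mod N ^ m"] Np by auto
  have "code (i # \<sigma>) = j" using \<sigma> by (simp add: i_def words_def div_mult_mod_eq)
  moreover have "i # \<sigma> \<in> words N (Suc m)" using \<sigma> i by (auto simp: words_def)
  ultimately show ?case by blast
qed

lemma rw: "set \<sigma> \<subseteq> {1..N} \<Longrightarrow> 0 < rw \<sigma> \<and> (\<forall>x y. dist (word_map S \<sigma> x) (word_map S \<sigma> y) = rw \<sigma> * dist x y)"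
proof (induction \<sigma>)
  case Nil then show ?case by (simp add: word_map_Nil)
next
  case (Cons i \<sigma>)
  then have i: "i \<in> {1..N}" and IH: "0 < rw \<sigma> \<and> (\<forall>x y. dist (word_map S \<sigma> x) (word_map S \<sigma> y) = rw \<sigma> * dist x y)" by auto
  show ?case using rat[OF i] IH by (simp add: word_map_Cons)
qed

lemma scale: "set \<sigma> \<subseteq> {1..N} \<Longrightarrow> u \<in> {0..1} \<Longrightarrow>
  h ((real (code \<sigma>) + u) / real N ^ length \<sigma>) = word_map S \<sigma> (h u)"
proof (induction \<sigma>)
  case Nil then show ?case by (simp add: word_map_Nil)
next
  case (Cons i \<sigma>)
  let ?m = "length \<sigma>"
  have i: "i \<in> {1..N}" using Cons.prems by auto
  have Np: "real N > 0" using N2 by auto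
  have Nm: "real N ^ ?m > 0" using Np by simp
  define v where "v = (real (code \<sigma>) + u) / real N ^ ?m"
  have cl: "code \<sigma> < N ^ ?m" using code_lt Cons.prems by auto
  then have "real (code \<sigma>) + 1 \<le> real N ^ ?m"
    by (metis Suc_leI of_nat_Suc of_nat_le_iff of_nat_power add.commute)
  then have v: "v \<in> {0..1}" using Cons.prems Nm by (auto simp: v_def field_simps)
  have ci: "real (code (i # \<sigma>)) = (real i - 1) * real N ^ ?m + real (code \<sigma>)"
    using i by (simp add: of_nat_diff)
  have t: "(real (code (i # \<sigma>)) + u) / real N ^ length (i # \<sigma>) = (real i - 1 + v) / N"
    unfolding ci v_def using Nm Np by (simp add: field_simps)
  have t1: "(real i - 1) / N \<le> (real i - 1 + v) / N" "(real i - 1 + v) / N \<le> real i / N"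
    using v Np by (auto simp: divide_right_mono)
  have t2: "real N * ((real i - 1 + v) / N) - (real i - 1) = v" using Np by simp
  have "h ((real i - 1 + v) / N) = S i (h v)" using h_piece[OF i t1] t2 by simp
  also have "h v = word_map S \<sigma> (h u)" unfolding v_def using Cons by auto
  finally show ?case using t by (simp add: word_map_Cons)
qed

lemma words_set: "\<sigma> \<in> words N m \<Longrightarrow> set \<sigma> \<subseteq> {1..N} \<and> length \<sigma> = m" by (simp add: words_def)

lemma vert_iff: "v \<in> vertices N S e m \<longleftrightarrow> (\<exists>j. j \<le> N ^ m \<and> v = h (real j / real N ^ m))"
proof
  assume "v \<in> vertices N S e m"
  then obtain \<sigma> where \<sigma>: "\<sigma> \<in> words N m" "v = word_map S \<sigma> 0 \<or> v = word_map S \<sigma> e"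
    unfolding vertices_def by auto
  have s: "set \<sigma> \<subseteq> {1..N}" "length \<sigma> = m" using words_set[OF \<sigma>(1)] by auto
  have cl: "code \<sigma> < N ^ m" using code_lt s by auto
  from \<sigma>(2) show "\<exists>j. j \<le> N ^ m \<and> v = h (real j / real N ^ m)"
  proof
    assume "v = word_map S \<sigma> 0"
    then have "v = h ((real (code \<sigma>) + 0) / real N ^ m)" using scale[OF s(1), of 0] s h_0 by simp
    then show ?thesis using cl by (intro exI[of _ "code \<sigma>"]) auto
  next
    assume "v = word_map S \<sigma> e"
    then have "v = h ((real (code \<sigma>) + 1) / real N ^ m)" using scale[OF s(1), of 1] s h_1 by simp
    then show ?thesis using cl by (intro exI[of _ "Suc (code \<sigma>)"]) (auto simp: add.commute)
  qed
next
  assume "\<exists>j. j \<le> N ^ m \<and> v = h (real j / real N ^ m)"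
  then obtain j where j: "j \<le> N ^ m" "v = h (real j / real N ^ m)" by auto
  show "v \<in> vertices N S e m"
  proof (cases "j < N ^ m")
    case True
    obtain \<sigma> where \<sigma>: "\<sigma> \<in> words N m" "code \<sigma> = j" using code_surj[OF True] by auto
    have s: "set \<sigma> \<subseteq> {1..N}" "length \<sigma> = m" using words_set[OF \<sigma>(1)] by auto
    have "v = word_map S \<sigma> 0" using scale[OF s(1), of 0] s h_0 j \<sigma> by simp
    then show ?thesis using \<sigma> unfolding vertices_def by auto
  next
    case False
    then have jj: "j = N ^ m" using j by simp
    have Np: "0 < N ^ m" using N2 by simp
    obtain \<sigma> where \<sigma>: "\<sigma> \<in> words N m" "code \<sigma> = N ^ m - 1" using code_surj[of "N ^ m - 1" m] Np by auto
    have s: "set \<sigma> \<subseteq> {1..N}" "length \<sigma> = m" using words_set[OF \<sigma>(1)] by auto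
    have "code \<sigma> + 1 = j" using \<sigma>(2) jj Np by simp
    then have "real (code \<sigma>) + 1 = real j" by (metis of_nat_1 of_nat_add)
    then have "v = word_map S \<sigma> e" using scale[OF s(1), of 1] s h_1 j by simp
    then show ?thesis using \<sigma> unfolding vertices_def by auto
  qed
qed

end

context ifs begin

abbreviation "DD \<equiv> D_S N S \<gamma> e"

definition X :: "real set" where
  "X = {dist x y | x y z z'.
       z \<in> vertices N S e 1 \<and> z' \<in> vertices N S e 1 \<and> arc_less \<gamma> e z z' \<and>
       x \<in> \<gamma> \<and> y \<in> \<gamma> \<and>
       (\<forall>p\<in>arc_seg \<gamma> e z z'. arc_le \<gamma> e x p) \<and>
       (\<forall>p\<in>arc_seg \<gamma> e z z'. arc_le \<gamma> e p y)}"

lemma DD_X: "DD = Inf X" unfolding D_S_def X_def by simp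

lemma gv1: "z \<in> vertices N S e 1 \<Longrightarrow> \<exists>j. j \<le> N \<and> z = h (real j / N) \<and> g z = real j / N"
proof -
  assume "z \<in> vertices N S e 1"
  then obtain j where j: "j \<le> N" "z = h (real j / N)" using vert_iff[of z 1] by auto
  have "real j / N \<in> {0..1}" using j N2 by auto
  then show ?thesis using j g_h by auto
qed

lemma X_char: assumes d: "d \<in> X"
  shows "\<exists>x y. d = dist x y \<and> x \<in> \<gamma> \<and> y \<in> \<gamma> \<and> g x + 1 / N \<le> g y"
proof -
  from d obtain x y z z' where d: "d = dist x y" and z: "z \<in> vertices N S e 1" "z' \<in> vertices N S e 1"
    and zz: "arc_less \<gamma> e z z'" and xy: "x \<in> \<gamma>" "y \<in> \<gamma>"
    and px: "\<forall>p\<in>arc_seg \<gamma> e z z'. arc_le \<gamma> e x p" and py: "\<forall>p\<in>arc_seg \<gamma> e z z'. arc_le \<gamma> e p y"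
    unfolding X_def by blast
  obtain i where i: "i \<le> N" "z = h (real i / N)" "g z = real i / N" using gv1[OF z(1)] by blast
  obtain j where j: "j \<le> N" "z' = h (real j / N)" "g z' = real j / N" using gv1[OF z(2)] by blast
  have zl: "arc_le \<gamma> e z z'" "z \<noteq> z'" using zz by (auto simp: arc_less_def)
  then have zin: "z \<in> \<gamma>" "z' \<in> \<gamma>" "g z \<le> g z'" using arc_le_iff by auto
  have "g z \<noteq> g z'" using zl(2) h_g zin by metis
  then have "g z < g z'" using zin(3) by simp
  then have "real i / N < real j / N" using i(3) j(3) by simp
  then have "i < j" using N2 by (simp add: divide_less_cancel)
  then have ij: "real i + 1 \<le> real j" by simp
  have "z \<in> arc_seg \<gamma> e z z'" "z' \<in> arc_seg \<gamma> e z z'" using zl(1) zin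
    by (auto simp: arc_seg_def arc_le_iff)
  then have "g x \<le> g z" "g z' \<le> g y" using px py arc_le_iff by auto
  moreover have "g z + 1 / N \<le> g z'" using i(3) j(3) ij N2 by (simp add: add_divide_distrib[symmetric] divide_right_mono)
  ultimately show ?thesis using d xy by (intro exI[of _ x] exI[of _ y]) auto
qed

lemma X_ne: "dist 0 e \<in> X"
proof -
  have v0: "0 \<in> vertices N S e 1" using vert_iff[of 0 1] h_0 by (intro iffD2[OF vert_iff]) (auto intro: exI[of _ 0])
  have v1: "e \<in> vertices N S e 1" using h_1 N2 by (intro iffD2[OF vert_iff]) (auto intro: exI[of _ N])
  have "arc_less \<gamma> e 0 e" using zero_in e_in g0 ge e_ne0 by (auto simp: arc_less_def arc_le_iff)
  moreover have "\<forall>p\<in>arc_seg \<gamma> e 0 e. arc_le \<gamma> e 0 p" "\<forall>p\<in>arc_seg \<gamma> e 0 e. arc_le \<gamma> e p e"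
    using g_in zero_in e_in g0 ge by (auto simp: arc_seg_def arc_le_iff)
  ultimately show ?thesis unfolding X_def using v0 v1 zero_in e_in by blast
qed

lemma X_bdd: "bdd_below X" unfolding X_def by (rule bdd_belowI[of _ 0]) auto

lemma DD_pos: "0 < DD"
proof -
  have Np: "real N > 0" using N2 by auto
  define K where "K = ({0..1} \<times> {0..1}) \<inter> {p :: real \<times> real. fst p + 1 / N \<le> snd p}"
  have cK: "compact K" unfolding K_def
    by (intro compact_Int_closed compact_Times closed_Collect_le continuous_intros) auto
  have "1 / real N \<le> 1" using N2 by simp
  then have "(0, 1) \<in> K" unfolding K_def by auto
  then have neK: "K \<noteq> {}" by blast
  have Ksub: "K \<subseteq> {0..1} \<times> {0..1}" unfolding K_def by auto
  have cf: "continuous_on K (\<lambda>p. dist (h (fst p)) (h (snd p)))"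
  proof (intro continuous_on_dist)
    show "continuous_on K (\<lambda>p. h (fst p))"
      by (rule continuous_on_compose2[OF h_cont continuous_on_fst]) (use Ksub in auto)
    show "continuous_on K (\<lambda>p. h (snd p))"
      by (rule continuous_on_compose2[OF h_cont continuous_on_snd]) (use Ksub in auto)
  qed
  obtain p0 where p0: "p0 \<in> K" "\<And>p. p \<in> K \<Longrightarrow> dist (h (fst p0)) (h (snd p0)) \<le> dist (h (fst p)) (h (snd p))"
    using continuous_attains_inf[OF cK neK cf] by blast
  define \<delta> where "\<delta> = dist (h (fst p0)) (h (snd p0))"
  have "fst p0 \<noteq> snd p0" using p0(1) Np unfolding K_def by auto
  moreover have "fst p0 \<in> {0..1}" "snd p0 \<in> {0..1}" using p0(1) Ksub by auto
  ultimately have "h (fst p0) \<noteq> h (snd p0)" using h_inj by (meson inj_onD)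
  then have dpos: "0 < \<delta>" by (simp add: \<delta>_def)
  have "\<delta> \<le> Inf X"
  proof (rule cInf_greatest)
    show "X \<noteq> {}" using X_ne by auto
    fix d assume "d \<in> X"
    then obtain x y where xy: "d = dist x y" "x \<in> \<gamma>" "y \<in> \<gamma>" "g x + 1 / N \<le> g y" using X_char by blast
    have "(g x, g y) \<in> K" using xy g_in unfolding K_def by auto
    then have "\<delta> \<le> dist (h (g x)) (h (g y))" using p0(2) unfolding \<delta>_def by fastforce
    then show "\<delta> \<le> d" using xy h_g by simp
  qed
  then show ?thesis using dpos DD_X by simp
qed

lemma DD_lower:
  assumes ij: "i < j" "j \<le> N" and s: "0 \<le> s" "s \<le> real i / N" and t: "real j / N \<le> t" "t \<le> 1"
  shows "DD \<le> dist (h s) (h t)"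
proof -
  have Np: "real N > 0" using N2 by auto
  define z where "z = h (real i / N)"
  define z' where "z' = h (real j / N)"
  have pi: "real i / N \<in> {0..1}" "real j / N \<in> {0..1}" using ij Np by auto
  have gz: "g z = real i / N" "g z' = real j / N" using g_h pi by (auto simp: z_def z'_def)
  have zin: "z \<in> \<gamma>" "z' \<in> \<gamma>" using h_in pi by (auto simp: z_def z'_def)
  have lt: "real i / N < real j / N" using ij Np by (simp add: divide_strict_right_mono)
  have v1: "z \<in> vertices N S e 1" unfolding z_def
    by (rule iffD2[OF vert_iff], rule exI[of _ i], use ij in simp)
  have v2: "z' \<in> vertices N S e 1" unfolding z'_def
    by (rule iffD2[OF vert_iff], rule exI[of _ j], use ij in simp)
  note v = v1 v2
  have al: "arc_less \<gamma> e z z'" using zin gz lt by (auto simp: arc_less_def arc_le_iff)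
  have j0: "0 \<le> real j / N" by simp
  have i1: "real i / N \<le> 1" using pi by simp
  have s1: "s \<in> {0..1}" unfolding atLeastAtMost_iff using s i1 by linarith
  have t1: "t \<in> {0..1}" unfolding atLeastAtMost_iff using t j0 by linarith
  note sin = s1 t1
  moreover have "\<forall>p\<in>arc_seg \<gamma> e z z'. arc_le \<gamma> e (h s) p" "\<forall>p\<in>arc_seg \<gamma> e z z'. arc_le \<gamma> e p (h t)"
    using gz s t sin h_in g_h by (auto simp: arc_seg_def arc_le_iff)
  ultimately have "dist (h s) (h t) \<in> X" unfolding X_def using al v h_in[OF s1] h_in[OF t1] by blast
  then show ?thesis unfolding DD_X by (rule cInf_lower[OF _ X_bdd])
qed

end

context ifs begin

lemma gamma_bounded: "bounded \<gamma>" using cpt by (rule compact_imp_bounded)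
lemma diam_nonneg: "0 \<le> diameter \<gamma>" by (rule diameter_ge_0[OF gamma_bounded])

lemma cell_point:
  assumes \<sigma>: "\<sigma> \<in> words N p" and r: "real (code \<sigma>) / real N ^ p \<le> r" "r \<le> (real (code \<sigma>) + 1) / real N ^ p"
  shows "r * real N ^ p - real (code \<sigma>) \<in> {0..1}"
    "h r = word_map S \<sigma> (h (r * real N ^ p - real (code \<sigma>)))"
proof -
  have Np: "real N ^ p > 0" using N2 by simp
  have s: "set \<sigma> \<subseteq> {1..N}" "length \<sigma> = p" using words_set[OF \<sigma>] by auto
  show u: "r * real N ^ p - real (code \<sigma>) \<in> {0..1}" using r Np by (auto simp: field_simps)
  have "h ((real (code \<sigma>) + (r * real N ^ p - real (code \<sigma>))) / real N ^ length \<sigma>)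
      = word_map S \<sigma> (h (r * real N ^ p - real (code \<sigma>)))" by (rule scale[OF s(1) u])
  moreover have "(real (code \<sigma>) + (r * real N ^ p - real (code \<sigma>))) / real N ^ length \<sigma> = r"
    using Np s(2) by simp
  ultimately show "h r = word_map S \<sigma> (h (r * real N ^ p - real (code \<sigma>)))" by simp
qed

lemma cellA:
  assumes k: "k < N ^ p" and ij: "i < j" "j \<le> N"
    and s: "real k / real N ^ p \<le> s" "s \<le> (real k * N + real i) / real N ^ Suc p"
    and t: "(real k * N + real j) / real N ^ Suc p \<le> t" "t \<le> (real k + 1) / real N ^ p"
  shows "DD * diameter (h ` {s..t}) \<le> diameter \<gamma> * dist (h s) (h t)"
proof -
  have Np0: "real N > 0" using N2 by simp
  have Np: "real N ^ p > 0" using N2 by simp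
  obtain \<sigma> where \<sigma>: "\<sigma> \<in> words N p" "code \<sigma> = k" using code_surj[OF k] by auto
  have sig: "set \<sigma> \<subseteq> {1..N}" using words_set[OF \<sigma>(1)] by auto
  obtain \<rho> where \<rho>: "0 < \<rho>" "\<And>x y. dist (word_map S \<sigma> x) (word_map S \<sigma> y) = \<rho> * dist x y"
    using rw[OF sig] by blast
  let ?W = "word_map S \<sigma>"
  have ij': "real i \<le> real N" "real j \<le> real N" using ij by auto
  have sub: "\<And>r. s \<le> r \<Longrightarrow> r \<le> t \<Longrightarrow> real (code \<sigma>) / real N ^ p \<le> r \<and> r \<le> (real (code \<sigma>) + 1) / real N ^ p"
    using s t \<sigma>(2) by auto
  have st: "s \<le> t"
  proof -
    have "(real k * N + real i) / real N ^ Suc p \<le> (real k * N + real j) / real N ^ Suc p"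
      using ij Np by (simp add: divide_right_mono)
    then show ?thesis using s t by linarith
  qed
  define s' where "s' = s * real N ^ p - real k"
  define t' where "t' = t * real N ^ p - real k"
  have cs: "s' \<in> {0..1}" "h s = ?W (h s')" using cell_point[OF \<sigma>(1)] sub[of s] st \<sigma>(2) by (auto simp: s'_def)
  have ct: "t' \<in> {0..1}" "h t = ?W (h t')" using cell_point[OF \<sigma>(1)] sub[of t] st \<sigma>(2) by (auto simp: t'_def)
  have s'i: "s' \<le> real i / N"
  proof -
    have "s * real N ^ p \<le> (real k * N + real i) / real N ^ Suc p * real N ^ p"
      by (rule mult_right_mono[OF s(2)]) (use Np in simp)
    also have "\<dots> = real k + real i / N" using Np0 Np by (simp add: field_simps)
    finally show ?thesis by (simp add: s'_def)
  qed
  have t'j: "real j / N \<le> t'"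
  proof -
    have "real k + real j / N = (real k * N + real j) / real N ^ Suc p * real N ^ p"
      using Np0 Np by (simp add: field_simps)
    also have "\<dots> \<le> t * real N ^ p" by (rule mult_right_mono[OF t(1)]) (use Np in simp)
    finally show ?thesis by (simp add: t'_def)
  qed
  have d1: "DD \<le> dist (h s') (h t')" by (rule DD_lower[OF ij]) (use cs ct s'i t'j in auto)
  have dst: "dist (h s) (h t) = \<rho> * dist (h s') (h t')" using cs ct \<rho> by simp
  have diam: "diameter (h ` {s..t}) \<le> \<rho> * diameter \<gamma>"
  proof (rule diameter_le)
    show "h ` {s..t} \<noteq> {} \<or> 0 \<le> \<rho> * diameter \<gamma>" using \<rho> diam_nonneg by simp
    fix a b assume ab: "a \<in> h ` {s..t}" "b \<in> h ` {s..t}"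
    then obtain ra rb where r: "ra \<in> {s..t}" "rb \<in> {s..t}" "a = h ra" "b = h rb" by auto
    have ca: "ra * real N ^ p - real (code \<sigma>) \<in> {0..1}" "h ra = ?W (h (ra * real N ^ p - real (code \<sigma>)))"
      using cell_point[OF \<sigma>(1)] sub r by auto
    have cb: "rb * real N ^ p - real (code \<sigma>) \<in> {0..1}" "h rb = ?W (h (rb * real N ^ p - real (code \<sigma>)))"
      using cell_point[OF \<sigma>(1)] sub r by auto
    have "norm (a - b) = \<rho> * dist (h (ra * real N ^ p - real (code \<sigma>))) (h (rb * real N ^ p - real (code \<sigma>)))"
      using r ca cb \<rho> by (simp add: dist_norm[symmetric])
    also have "\<dots> \<le> \<rho> * diameter \<gamma>"
      using \<rho>(1) diameter_bounded_bound[OF gamma_bounded h_in[OF ca(1)] h_in[OF cb(1)]] by simp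
    finally show "norm (a - b) \<le> \<rho> * diameter \<gamma>" .
  qed
  have DD0: "0 \<le> DD" using DD_pos by simp
  have "DD * diameter (h ` {s..t}) \<le> DD * (\<rho> * diameter \<gamma>)" by (rule mult_left_mono[OF diam DD0])
  also have "\<dots> = diameter \<gamma> * (\<rho> * DD)" by simp
  also have "\<dots> \<le> diameter \<gamma> * (\<rho> * dist (h s') (h t'))"
    using d1 \<rho>(1) diam_nonneg by (simp add: mult_left_mono)
  also have "\<dots> = diameter \<gamma> * dist (h s) (h t)" using dst by simp
  finally show ?thesis .
qed

end

context ifs begin

lemma find_p:
  assumes d: "0 < d" "d < 1 / real N ^ m"
  shows "\<exists>p\<ge>m. 1 / real N ^ Suc p \<le> d \<and> d < 1 / real N ^ p"
proof -
  have N1: "1 < real N" using N2 by simp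
  define Q where "Q p = (1 / real N ^ Suc p \<le> d)" for p
  have "1 / real N < 1" using N2 by simp
  then obtain n where "(1 / real N) ^ n < d" using real_arch_pow_inv d(1) by blast
  then have "1 / real N ^ n < d" by (simp add: power_one_over)
  moreover have "1 / real N ^ Suc n \<le> 1 / real N ^ n" using N1
    by (intro divide_left_mono power_increasing) auto
  ultimately have "Q n" unfolding Q_def by simp
  define p0 where "p0 = (LEAST p. Q p)"
  have Qp0: "Q p0" unfolding p0_def by (rule LeastI[of Q, OF \<open>Q n\<close>])
  have lt: "d < 1 / real N ^ p0"
  proof (cases p0)
    case 0
    have "1 / real N ^ m \<le> 1" using N1 by simp
    then show ?thesis using 0 d by simp
  next
    case (Suc p1)
    have "\<not> Q p1" using not_less_Least[of p1 Q] Suc unfolding p0_def by simp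
    then show ?thesis using Suc by (simp add: Q_def)
  qed
  have "m \<le> p0"
  proof (rule ccontr)
    assume "\<not> m \<le> p0"
    then have "Suc p0 \<le> m" by simp
    then have "1 / real N ^ m \<le> 1 / real N ^ Suc p0" using N1
      by (intro divide_left_mono power_increasing) auto
    then show False using Qp0 d unfolding Q_def by simp
  qed
  then show ?thesis using Qp0 lt unfolding Q_def by blast
qed

lemma pow_split: "m \<le> p \<Longrightarrow> real N ^ p = real N ^ m * real N ^ (p - m)"
  by (metis le_add_diff_inverse power_add)

lemma RS:
  assumes j0: "j0 \<le> N ^ m" and c: "c = real j0 / real N ^ m" and ct: "c \<le> t" "t \<le> 1"
    and uq: "\<And>j1. j1 \<le> N ^ m \<Longrightarrow> c \<le> real j1 / real N ^ m \<Longrightarrow> real j1 / real N ^ m \<le> t \<Longrightarrow> j1 = j0"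
  shows "DD * diameter (h ` {c..t}) \<le> diameter \<gamma> * dist (h c) (h t)"
proof (cases "t = c")
  case True
  then show ?thesis using diam_nonneg by simp
next
  case False
  then have ct': "c < t" using ct by simp
  have Nm: "real N ^ m > 0" using N2 by simp
  have N0: "real N > 0" using N2 by simp
  have lt: "t < real (Suc j0) / real N ^ m"
  proof (rule ccontr)
    assume a: "\<not> ?thesis"
    show False
    proof (cases "Suc j0 \<le> N ^ m")
      case True
      have "c \<le> real (Suc j0) / real N ^ m" using c Nm by (simp add: divide_right_mono)
      then have "Suc j0 = j0" using uq[OF True] a by simp
      then show False by simp
    next
      case False
      then have "j0 = N ^ m" using j0 by simp
      then have "c = 1" using c Nm by simp
      then show False using ct' ct by simp
    qed
  qed
  have "real (Suc j0) / real N ^ m = c + 1 / real N ^ m" using c Nm by (simp add: field_simps)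
  then have d: "0 < t - c" "t - c < 1 / real N ^ m" using lt ct' by auto
  obtain p where p: "m \<le> p" "1 / real N ^ Suc p \<le> t - c" "t - c < 1 / real N ^ p"
    using find_p[OF d] by blast
  define k where "k = j0 * N ^ (p - m)"
  have Np: "real N ^ p > 0" using N2 by simp
  have kc: "real k / real N ^ p = c" unfolding k_def c using pow_split[OF p(1)] Nm N2 by (simp add: field_simps)
  have "c < 1" using ct' ct by simp
  then have "real k < real N ^ p" using kc Np by (simp add: field_simps)
  then have k: "k < N ^ p" by (metis of_nat_less_iff of_nat_power)
  have e1: "(real k * N + real 0) / real N ^ Suc p = c" using kc N0 by (simp add: field_simps)
  have e2: "(real k * N + real 1) / real N ^ Suc p = c + 1 / real N ^ Suc p" using kc N0 Np by (simp add: field_simps)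
  have e3: "(real k + 1) / real N ^ p = c + 1 / real N ^ p" using kc Np by (simp add: field_simps)
  have h1: "real k / real N ^ p \<le> c" using kc by simp
  have h2: "c \<le> (real k * N + real (0::nat)) / real N ^ Suc p" using e1 by simp
  have h3: "(real k * N + real (1::nat)) / real N ^ Suc p \<le> t" using e2 p(2) by simp
  have h4: "t \<le> (real k + 1) / real N ^ p" using e3 p(3) by simp
  show ?thesis by (rule cellA[OF k _ _ h1 h2 h3 h4]) (use N2 in auto)
qed

lemma LS:
  assumes j0: "j0 \<le> N ^ m" and c: "c = real j0 / real N ^ m" and sc: "0 \<le> s" "s \<le> c"
    and uq: "\<And>j1. j1 \<le> N ^ m \<Longrightarrow> s \<le> real j1 / real N ^ m \<Longrightarrow> real j1 / real N ^ m \<le> c \<Longrightarrow> j1 = j0"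
  shows "DD * diameter (h ` {s..c}) \<le> diameter \<gamma> * dist (h s) (h c)"
proof (cases "s = c")
  case True
  then show ?thesis using diam_nonneg by simp
next
  case False
  then have sc': "s < c" using sc by simp
  have Nm: "real N ^ m > 0" using N2 by simp
  have N0: "real N > 0" using N2 by simp
  have j01: "1 \<le> j0" using sc' sc c by (cases j0) auto
  have lt: "real (j0 - 1) / real N ^ m < s"
  proof (rule ccontr)
    assume a: "\<not> ?thesis"
    have "real (j0 - 1) / real N ^ m \<le> c" using c Nm by (simp add: divide_right_mono)
    then have "j0 - 1 = j0" using uq[of "j0 - 1"] a j0 by simp
    then show False using j01 by simp
  qed
  have "real (j0 - 1) / real N ^ m = c - 1 / real N ^ m" using c Nm j01 by (simp add: field_simps of_nat_diff)
  then have d: "0 < c - s" "c - s < 1 / real N ^ m" using lt sc' by auto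
  obtain p where p: "m \<le> p" "1 / real N ^ Suc p \<le> c - s" "c - s < 1 / real N ^ p"
    using find_p[OF d] by blast
  define k where "k = j0 * N ^ (p - m) - 1"
  have Np: "real N ^ p > 0" using N2 by simp
  have kp: "1 \<le> j0 * N ^ (p - m)" using j01 N2 by simp
  have kc: "(real k + 1) / real N ^ p = c" unfolding k_def c using pow_split[OF p(1)] Nm kp N2
    by (simp add: field_simps of_nat_diff)
  have "real j0 \<le> real N ^ m" using j0 by (metis of_nat_le_iff of_nat_power)
  then have "c \<le> 1" using Nm by (simp add: c pos_divide_le_eq)
  then have "real k + 1 \<le> real N ^ p" using kc Np by (simp add: field_simps)
  then have k: "k < N ^ p" by (metis Suc_le_eq of_nat_Suc of_nat_le_iff of_nat_power add.commute)
  have e0: "real k / real N ^ p = c - 1 / real N ^ p" using kc Np by (simp add: field_simps)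
  have "(real k * N + real (N - 1)) / real N ^ Suc p = (real k + 1) / real N ^ p - 1 / real N ^ Suc p"
    using N0 Np N2 by (simp add: field_simps of_nat_diff)
  then have e1: "(real k * N + real (N - 1)) / real N ^ Suc p = c - 1 / real N ^ Suc p"
    using kc by simp
  have "(real k * N + real N) / real N ^ Suc p = (real k + 1) / real N ^ p" using N0 Np
    by (simp add: field_simps)
  then have e2: "(real k * N + real N) / real N ^ Suc p = c" using kc by simp
  have h1: "real k / real N ^ p \<le> s" using e0 p(3) by simp
  have h2: "s \<le> (real k * N + real (N - 1)) / real N ^ Suc p" using e1 p(2) by simp
  have h3: "(real k * N + real N) / real N ^ Suc p \<le> c" using e2 by simp
  have h4: "c \<le> (real k + 1) / real N ^ p" using kc by simp
  show ?thesis by (rule cellA[OF k _ _ h1 h2 h3 h4]) (use N2 in auto)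
qed

end

context ifs begin

lemma diam_union:
  fixes A BB :: "'a set"
  assumes A: "bounded A" and BB: "bounded BB" and x: "x \<in> A" "x \<in> BB"
  shows "diameter (A \<union> BB) \<le> diameter A + diameter BB"
proof (rule diameter_le)
  have "0 \<le> diameter A" "0 \<le> diameter BB" using diameter_ge_0 A BB by auto
  then show "A \<union> BB \<noteq> {} \<or> 0 \<le> diameter A + diameter BB" by simp
  fix a b assume ab: "a \<in> A \<union> BB" "b \<in> A \<union> BB"
  have dA: "\<And>u v. u \<in> A \<Longrightarrow> v \<in> A \<Longrightarrow> dist u v \<le> diameter A" using diameter_bounded_bound[OF A] by blast
  have dBB: "\<And>u v. u \<in> BB \<Longrightarrow> v \<in> BB \<Longrightarrow> dist u v \<le> diameter BB" using diameter_bounded_bound[OF BB] by blast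
  have n: "0 \<le> diameter A" "0 \<le> diameter BB" using diameter_ge_0 A BB by auto
  have "dist a b \<le> diameter A + diameter BB"
  proof -
    { assume "a \<in> A" "b \<in> A" then have ?thesis using dA n by force }
    moreover { assume "a \<in> BB" "b \<in> BB" then have ?thesis using dBB n by force }
    moreover { assume "a \<in> A" "b \<in> BB"
      then have ?thesis using dist_triangle[of a b x] dA[of a x] dBB[of x b] x by (simp add: dist_commute) }
    moreover { assume "a \<in> BB" "b \<in> A"
      then have ?thesis using dist_triangle[of a b x] dBB[of a x] dA[of x b] x by (simp add: dist_commute) }
    ultimately show ?thesis using ab by blast
  qed
  then show "norm (a - b) \<le> diameter A + diameter BB" by (simp add: dist_norm)
qed

lemma param01: "j \<le> N ^ k \<Longrightarrow> real j / real N ^ k \<in> {0..1}"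
proof -
  assume "j \<le> N ^ k"
  then have "real j \<le> real N ^ k" by (metis of_nat_le_iff of_nat_power)
  moreover have "real N ^ k > 0" using N2 by simp
  ultimately show ?thesis by (simp add: pos_divide_le_eq)
qed

lemma himg_bounded: "{a..b} \<subseteq> {0..1} \<Longrightarrow> bounded (h ` {a..b})"
  by (intro compact_imp_bounded compact_continuous_image continuous_on_subset[OF h_cont]) auto

lemma core:
  assumes C: "1 \<le> C"
    and hyp: "\<forall>x z y. case2_triple N S \<gamma> e x z y \<longrightarrow> max (dist x z) (dist z y) \<le> C * dist x y"
    and st: "0 \<le> s" "s < t" "t \<le> 1"
  shows "DD * diameter (h ` {s..t}) \<le> 2 * C * diameter \<gamma> * dist (h s) (h t)"
proof -
  have N0: "real N > 0" using N2 by simp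
  have N1: "1 < real N" using N2 by simp
  define P where "P m \<longleftrightarrow> 1 \<le> m \<and> (\<exists>j. j \<le> N ^ m \<and> s \<le> real j / real N ^ m \<and> real j / real N ^ m \<le> t)" for m
  have exP: "P (Suc m0)" if m0: "1 / real N ^ m0 < t - s" for m0
  proof -
    let ?m = "Suc m0"
    have Nm: "real N ^ ?m > 0" using N0 by simp
    have "1 / real N ^ ?m \<le> 1 / real N ^ m0" using N1 by (intro divide_left_mono power_increasing) auto
    then have mm: "1 / real N ^ ?m < t - s" using m0 by simp
    define j where "j = nat \<lceil>s * real N ^ ?m\<rceil>"
    have rj: "real j = of_int \<lceil>s * real N ^ ?m\<rceil>" unfolding j_def using st Nm by simp
    have j1: "s * real N ^ ?m \<le> real j" "real j < s * real N ^ ?m + 1" unfolding rj by linarith+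
    have js: "s \<le> real j / real N ^ ?m" using j1 Nm by (simp add: pos_le_divide_eq)
    have "real j / real N ^ ?m < (s * real N ^ ?m + 1) / real N ^ ?m" using j1 Nm by (simp add: divide_strict_right_mono)
    also have "\<dots> = s + 1 / real N ^ ?m" using Nm N2 by (simp add: add_divide_distrib)
    finally have jt: "real j / real N ^ ?m < t" using mm by simp
    then have "real j < t * real N ^ ?m" using Nm by (simp add: pos_divide_less_eq)
    moreover have "t * real N ^ ?m \<le> 1 * real N ^ ?m" by (rule mult_right_mono) (use st Nm in auto)
    ultimately have "real j < real N ^ ?m" by linarith
    then have "j \<le> N ^ ?m" by (metis less_imp_le of_nat_less_iff of_nat_power)
    then show ?thesis unfolding P_def using js jt by auto
  qed
  have "1 / real N < 1" using N1 by simp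
  then obtain m0 where "(1 / real N) ^ m0 < t - s" using real_arch_pow_inv st by (metis diff_gt_0_iff_gt)
  then have "P (Suc m0)" using exP by (simp add: power_one_over)
  define m where "m = (LEAST m. P m)"
  have Pm: "P m" unfolding m_def by (rule LeastI[of P, OF \<open>P (Suc m0)\<close>])
  have minP: "\<And>k. k < m \<Longrightarrow> \<not> P k" unfolding m_def by (rule not_less_Least)
  have m1: "1 \<le> m" using Pm P_def by simp
  obtain j0 where j0: "j0 \<le> N ^ m" "s \<le> real j0 / real N ^ m" "real j0 / real N ^ m \<le> t"
    using Pm P_def by blast
  define c where "c = real j0 / real N ^ m"
  have Nm: "real N ^ m > 0" using N0 by simp
  have dn: "0 \<le> diameter \<gamma> * dist (h s) (h t)" using diam_nonneg by simp
  show ?thesis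
  proof (cases "\<exists>j1. j1 \<le> N ^ m \<and> s \<le> real j1 / real N ^ m \<and> real j1 / real N ^ m \<le> t \<and> j1 \<noteq> j0")
    case True
    then obtain j1 where j1: "j1 \<le> N ^ m" "s \<le> real j1 / real N ^ m" "real j1 / real N ^ m \<le> t" "j1 \<noteq> j0"
      by blast
    define jl where "jl = min j0 j1"
    define jh where "jh = max j0 j1"
    have jlh: "jl < jh" "s \<le> real jl / real N ^ m" "real jh / real N ^ m \<le> t"
      using j0 j1 by (auto simp: jl_def jh_def min_def max_def)
    define p where "p = m - 1"
    have mp: "m = Suc p" using m1 by (simp add: p_def)
    have Np: "real N ^ p > 0" using N0 by simp
    have Nmp: "real N ^ m = real N ^ p * real N" using mp by simp
    define k where "k = nat \<lfloor>s * real N ^ p\<rfloor>"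
    have rk: "real k = of_int \<lfloor>s * real N ^ p\<rfloor>" unfolding k_def using st Np by simp
    have k1: "real k \<le> s * real N ^ p" "s * real N ^ p < real k + 1" unfolding rk by linarith+
    have tk: "t \<le> (real k + 1) / real N ^ p"
    proof (rule ccontr)
      assume a: "\<not> ?thesis"
      show False
      proof (cases "p = 0")
        case True
        then have "real k \<le> s" using k1 by simp
        then have "k = 0" using st by simp
        then show False using a True st by simp
      next
        case False
        have a': "real (Suc k) / real N ^ p < t" using a by (simp add: add.commute not_le)
        then have "real (Suc k) < t * real N ^ p" using Np by (simp add: pos_divide_less_eq)
        moreover have "t * real N ^ p \<le> 1 * real N ^ p" by (rule mult_right_mono) (use st Np in auto)
        ultimately have "real (Suc k) < real N ^ p" by linarith
        then have "Suc k \<le> N ^ p" by (metis less_imp_le of_nat_less_iff of_nat_power)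
        moreover have "s \<le> real (Suc k) / real N ^ p" using k1 Np by (simp add: pos_le_divide_eq)
        ultimately have "P p" unfolding P_def using False a' less_imp_le by (auto intro!: exI[of _ "Suc k"])
        then show False using minP mp by simp
      qed
    qed
    have "s * real N ^ p < 1 * real N ^ p" by (rule mult_strict_right_mono) (use st Np in auto)
    then have "real k < real N ^ p" using k1 by linarith
    then have kN: "k < N ^ p" by (metis of_nat_less_iff of_nat_power)
    have "real k * real N \<le> real jl"
    proof -
      have "real k * real N \<le> s * real N ^ p * real N" using k1 N0 by simp
      also have "\<dots> = s * real N ^ m" using Nmp by simp
      also have "\<dots> \<le> real jl" using jlh(2) Nm by (simp add: pos_le_divide_eq)
      finally show ?thesis .
    qed
    then have kl: "k * N \<le> jl" by (metis of_nat_le_iff of_nat_mult)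
    have "real jh \<le> (real k + 1) * real N"
    proof -
      have "real jh \<le> t * real N ^ m" using jlh(3) Nm by (simp add: pos_divide_le_eq)
      also have "\<dots> \<le> (real k + 1) / real N ^ p * real N ^ m" by (rule mult_right_mono[OF tk]) (use Nm in simp)
      also have "\<dots> = (real k + 1) * real N" using Nmp Np by simp
      finally show ?thesis .
    qed
    then have kh: "jh \<le> (k + 1) * N" by (metis of_nat_1 of_nat_add of_nat_le_iff of_nat_mult)
    define i where "i = jl - k * N"
    define j where "j = jh - k * N"
    have ij: "i < j" "j \<le> N" using kl kh jlh(1) by (auto simp: i_def j_def)
    have ri: "real k * N + real i = real jl" using kl by (simp add: i_def of_nat_diff)
    have rj: "real k * N + real j = real jh" using kl kh jlh(1) by (simp add: j_def of_nat_diff)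
    have h1: "real k / real N ^ p \<le> s" using k1 Np by (simp add: pos_divide_le_eq)
    have h2: "s \<le> (real k * N + real i) / real N ^ Suc p" using ri jlh(2) mp by simp
    have h3: "(real k * N + real j) / real N ^ Suc p \<le> t" using rj jlh(3) mp by simp
    have "DD * diameter (h ` {s..t}) \<le> diameter \<gamma> * dist (h s) (h t)"
      by (rule cellA[OF kN ij h1 h2 h3 tk])
    also have "\<dots> = 1 * (diameter \<gamma> * dist (h s) (h t))" by simp
    also have "\<dots> \<le> (2 * C) * (diameter \<gamma> * dist (h s) (h t))"
      by (rule mult_right_mono) (use C dn in auto)
    finally show ?thesis by (simp add: mult.assoc)
  next
    case False
    then have uq: "\<And>j1. j1 \<le> N ^ m \<Longrightarrow> s \<le> real j1 / real N ^ m \<Longrightarrow> real j1 / real N ^ m \<le> t \<Longrightarrow> j1 = j0"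
      by blast
    have cst: "s \<le> c" "c \<le> t" using j0 by (auto simp: c_def)
    have c01: "c \<in> {0..1}" using param01[OF j0(1)] by (simp add: c_def)
    have s01: "s \<in> {0..1}" "t \<in> {0..1}" using st by auto
    have c2: "case2_triple N S \<gamma> e (h s) (h c) (h t)"
      unfolding case2_triple_def
    proof (intro conjI exI[of _ m])
      have "h s \<noteq> h t" using h_inj s01 st by (metis inj_onD less_irrefl)
      then show "arc_less \<gamma> e (h s) (h t)" using s01 st h_in g_h by (auto simp: arc_less_def arc_le_iff)
      show "1 \<le> m" by (rule m1)
      show "\<forall>k. 1 \<le> k \<and> k < m \<longrightarrow> \<not> (\<exists>v\<in>vertices N S e k. arc_le \<gamma> e (h s) v \<and> arc_le \<gamma> e v (h t))"
      proof (intro allI impI notI)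
        fix k assume k: "1 \<le> k \<and> k < m" and "\<exists>v\<in>vertices N S e k. arc_le \<gamma> e (h s) v \<and> arc_le \<gamma> e v (h t)"
        then obtain v where v: "v \<in> vertices N S e k" "arc_le \<gamma> e (h s) v" "arc_le \<gamma> e v (h t)" by blast
        obtain j where j: "j \<le> N ^ k" "v = h (real j / real N ^ k)" using v(1) vert_iff by blast
        have gv: "g v = real j / real N ^ k" using j g_h param01 by simp
        have "s \<le> real j / real N ^ k" "real j / real N ^ k \<le> t" using v(2,3) arc_le_iff gv g_h s01 by auto
        then have "P k" unfolding P_def using k j by blast
        then show False using minP k by blast
      qed
      show "h c \<in> vertices N S e m" using j0(1) by (auto simp: vert_iff c_def)
      show "arc_le \<gamma> e (h s) (h c)" "arc_le \<gamma> e (h c) (h t)" using cst c01 s01 h_in g_h by (auto simp: arc_le_iff)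
      show "\<forall>v\<in>vertices N S e m. arc_le \<gamma> e (h s) v \<and> arc_le \<gamma> e v (h t) \<longrightarrow> v = h c"
      proof (intro ballI impI)
        fix v assume v: "v \<in> vertices N S e m" "arc_le \<gamma> e (h s) v \<and> arc_le \<gamma> e v (h t)"
        obtain j where j: "j \<le> N ^ m" "v = h (real j / real N ^ m)" using v(1) vert_iff by blast
        have gv: "g v = real j / real N ^ m" using j g_h param01 by simp
        have "s \<le> real j / real N ^ m" "real j / real N ^ m \<le> t" using v(2) arc_le_iff gv g_h s01 by auto
        then have "j = j0" using uq j(1) by blast
        then show "v = h c" using j by (simp add: c_def)
      qed
    qed
    then have mx: "max (dist (h s) (h c)) (dist (h c) (h t)) \<le> C * dist (h s) (h t)" using hyp by blast
    have R: "DD * diameter (h ` {c..t}) \<le> diameter \<gamma> * dist (h c) (h t)"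
      by (rule RS[OF j0(1) c_def cst(2) st(3)]) (use uq cst in force)
    have L: "DD * diameter (h ` {s..c}) \<le> diameter \<gamma> * dist (h s) (h c)"
      by (rule LS[OF j0(1) c_def st(1) cst(1)]) (use uq cst in force)
    have "{s..t} = {s..c} \<union> {c..t}" using cst by auto
    then have U: "h ` {s..t} = h ` {s..c} \<union> h ` {c..t}" by (simp add: image_Un)
    have du: "diameter (h ` {s..t}) \<le> diameter (h ` {s..c}) + diameter (h ` {c..t})"
      unfolding U by (rule diam_union[of _ _ "h c"]) (use cst st c01 in \<open>auto intro!: himg_bounded\<close>)
    have DD0: "0 \<le> DD" using DD_pos by simp
    have "DD * diameter (h ` {s..t}) \<le> DD * diameter (h ` {s..c}) + DD * diameter (h ` {c..t})"
      using mult_left_mono[OF du DD0] by (simp add: distrib_left)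
    also have "\<dots> \<le> diameter \<gamma> * (dist (h s) (h c) + dist (h c) (h t))" using L R by (simp add: distrib_left)
    also have "\<dots> \<le> diameter \<gamma> * (2 * (C * dist (h s) (h t)))"
      using mx diam_nonneg by (intro mult_left_mono) auto
    finally show ?thesis by (simp add: mult.assoc mult.left_commute)
  qed
qed

end

context ifs begin

lemma part1:
  assumes C: "1 \<le> C"
    and hyp: "\<forall>x z y. case2_triple N S \<gamma> e x z y \<longrightarrow> max (dist x z) (dist z y) \<le> C * dist x y"
  shows "bounded_turning \<gamma> (2 * C * diameter \<gamma> / DD)"
proof -
  let ?K = "2 * C * diameter \<gamma> / DD"
  have key: "\<exists>E. E \<subseteq> \<gamma> \<and> compact E \<and> connected E \<and> h s \<in> E \<and> h t \<in> E \<and> diameter E \<le> ?K * dist (h s) (h t)"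
    if st: "0 \<le> s" "s < t" "t \<le> 1" for s t
  proof (intro exI conjI)
    have sub: "{s..t} \<subseteq> {0..1}" using st by auto
    show "h ` {s..t} \<subseteq> \<gamma>" using h_in sub by auto
    show "compact (h ` {s..t})" by (intro compact_continuous_image continuous_on_subset[OF h_cont sub]) simp
    show "connected (h ` {s..t})" by (intro connected_continuous_image continuous_on_subset[OF h_cont sub]) simp
    show "h s \<in> h ` {s..t}" "h t \<in> h ` {s..t}" using st by auto
    have c: "DD * diameter (h ` {s..t}) \<le> 2 * C * diameter \<gamma> * dist (h s) (h t)" by (rule core[OF C hyp st])
    have "diameter (h ` {s..t}) \<le> 2 * C * diameter \<gamma> * dist (h s) (h t) / DD"
      using c DD_pos by (simp add: pos_le_divide_eq mult.commute)
    then show "diameter (h ` {s..t}) \<le> ?K * dist (h s) (h t)" by simp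
  qed
  show ?thesis unfolding bounded_turning_def
  proof (intro ballI impI)
    fix a b assume ab: "a \<in> \<gamma>" "b \<in> \<gamma>" "a \<noteq> b"
    have hga: "h (g a) = a" "h (g b) = b" using h_g ab by auto
    have gi: "g a \<in> {0..1}" "g b \<in> {0..1}" using g_in ab by auto
    have ne: "g a \<noteq> g b" using hga ab by metis
    show "\<exists>E\<subseteq>\<gamma>. compact E \<and> connected E \<and> a \<in> E \<and> b \<in> E \<and> diameter E \<le> ?K * dist a b"
    proof (cases "g a < g b")
      case True
      then show ?thesis using key[of "g a" "g b"] gi hga by auto
    next
      case False
      then have "g b < g a" using ne by simp
      then show ?thesis using key[of "g b" "g a"] gi hga by (auto simp: dist_commute)
    qed
  qed
qed

end

theorem lemma3p1:
  fixes N :: nat and S :: "nat \<Rightarrow> 'a::euclidean_space \<Rightarrow> 'a" and \<gamma> :: "'a set" and e :: 'a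
  assumes "e \<in> Basis"
    and "normalized_IFS_arc N S \<gamma> e"
  shows "(\<forall>C::real. C \<ge> 1 \<and>
            (\<forall>x z y. case2_triple N S \<gamma> e x z y \<longrightarrow> max (dist x z) (dist z y) \<le> C * dist x y)
          \<longrightarrow> bounded_turning \<gamma> (2 * C * diameter \<gamma> / D_S N S \<gamma> e))
       \<and> (\<forall>C::real. C \<ge> 1 \<and> bounded_turning \<gamma> C \<longrightarrow>
            (\<forall>x z y. arc_le \<gamma> e x z \<and> arc_le \<gamma> e z y \<longrightarrow> max (dist x z) (dist z y) \<le> C * dist x y))"
proof -
  interpret ifs N S \<gamma> e by (rule ifs.intro) (fact assms)+
  show ?thesis using part1 part2 by blast
qed


end
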